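(* Let $\alpha\colon\Gamma\curvearrowright X$ be an action of a countable group on a compact, Hausdorff, $0$-dimensional space. Then $T(\alpha)$ is almost unperforated if and only if for all $a,b\in T(\alpha)$ the following holds: if there exists $k\in\mathbb N$ with $a\le kb$, and every $\mu\in\mathcal M_\infty(\alpha)$ with $\mu(b)=1$ satisfies $\mu(a)<1$, then $a\le b$.
   Context: Clopen type semigroup: let $Y = X\times\mathbb N$, and let $\tilde\Gamma=\Gamma\times\mathfrak S$ ($\mathfrak S$ the permutation group of $\mathbb N$) act on $Y$ by $(\gamma,\sigma)(x,n)=(\alpha(\gamma)x,\sigma(n))$. A clopen $A\subseteq Y$ is bounded if $A\cap(X\times\{n\})=\emptyset$ for all large $n$. Bounded clopen $A,B$ are equidecomposable if there are clopen $A_1,\dots,A_n$ and $\tilde\gamma_i\in\tilde\Gamma$ with $A=\bigsqcup_i A_i$, $B=\bigsqcup_i\tilde\gamma_iA_i$. $T(\alpha)$ is the set of classes $[A]$, with $[A]+[B]=[A'\sqcup B']$ for disjoint representatives; $0=[\emptyset]$. $a\le b$ iff $b=a+c$ for some $c\in T(\alpha)$. $T(\alpha)$ is almost unperforated if $(n+1)a\le nb\Rightarrow a\le b$ for all $a,b\in T(\alpha)$ and $n\in\mathbb N$. A state is a monoid homomorphism $\mu\colon (T(\alpha),+)\to[0,+\infty]$ (with $x+\infty=\infty$); $\mathcal M_\infty(\alpha)$ denotes the set of states. *)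

theory Defs
  imports "HOL-Analysis.Analysis" "HOL-Algebra.Group"
begin

definition continuous_action :: "('g, 'b) monoid_scheme \<Rightarrow> ('g \<Rightarrow> 'x::topological_space \<Rightarrow> 'x) \<Rightarrow> bool" where
  "continuous_action G \<alpha> \<longleftrightarrow> group G \<and> \<alpha> \<one>\<^bsub>G\<^esub> = id \<and>
     (\<forall>g\<in>carrier G. \<forall>h\<in>carrier G. \<alpha> (g \<otimes>\<^bsub>G\<^esub> h) = \<alpha> g \<circ> \<alpha> h) \<and>
     (\<forall>g\<in>carrier G. continuous_on UNIV (\<alpha> g))"

definition zero_dimensional :: "'x::topological_space itself \<Rightarrow> bool" where
  "zero_dimensional _ \<longleftrightarrow> (\<forall>U::'x set. \<forall>x. open U \<and> x \<in> U \<longrightarrow> (\<exists>V. open V \<and> closed V \<and> x \<in> V \<and> V \<subseteq> U))"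

text \<open>Y = X \<times> nat with the product topology (nat discrete).\<close>
definition clopenY :: "('x::topological_space \<times> nat) set \<Rightarrow> bool" where
  "clopenY A \<longleftrightarrow> open A \<and> closed A"

definition boundedY :: "('x \<times> nat) set \<Rightarrow> bool" where
  "boundedY A \<longleftrightarrow> (\<exists>N. \<forall>n\<ge>N. A \<inter> (UNIV \<times> {n}) = {})"

definition actY :: "('g \<Rightarrow> 'x \<Rightarrow> 'x) \<Rightarrow> 'g \<Rightarrow> (nat \<Rightarrow> nat) \<Rightarrow> ('x \<times> nat) set \<Rightarrow> ('x \<times> nat) set" where
  "actY \<alpha> g \<sigma> A = (\<lambda>(x, n). (\<alpha> g x, \<sigma> n)) ` A"

definition equidec :: "('g, 'b) monoid_scheme \<Rightarrow> ('g \<Rightarrow> 'x::topological_space \<Rightarrow> 'x)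
    \<Rightarrow> ('x \<times> nat) set \<Rightarrow> ('x \<times> nat) set \<Rightarrow> bool" where
  "equidec G \<alpha> A B \<longleftrightarrow>
     (\<exists>(n::nat) P g s. (\<forall>i<n. clopenY (P i) \<and> g i \<in> carrier G \<and> bij (s i)) \<and>
        disjoint_family_on P {..<n} \<and> A = (\<Union>i<n. P i) \<and>
        disjoint_family_on (\<lambda>i. actY \<alpha> (g i) (s i) (P i)) {..<n} \<and>
        B = (\<Union>i<n. actY \<alpha> (g i) (s i) (P i)))"

definition tcls :: "('g, 'b) monoid_scheme \<Rightarrow> ('g \<Rightarrow> 'x::topological_space \<Rightarrow> 'x)
    \<Rightarrow> ('x \<times> nat) set \<Rightarrow> ('x \<times> nat) set set" where
  "tcls G \<alpha> A = {B. clopenY B \<and> boundedY B \<and> equidec G \<alpha> A B}"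

definition Tsg :: "('g, 'b) monoid_scheme \<Rightarrow> ('g \<Rightarrow> 'x::topological_space \<Rightarrow> 'x) \<Rightarrow> ('x \<times> nat) set set set" where
  "Tsg G \<alpha> = {tcls G \<alpha> A | A. clopenY A \<and> boundedY A}"

definition tadd :: "('g, 'b) monoid_scheme \<Rightarrow> ('g \<Rightarrow> 'x::topological_space \<Rightarrow> 'x)
    \<Rightarrow> ('x \<times> nat) set set \<Rightarrow> ('x \<times> nat) set set \<Rightarrow> ('x \<times> nat) set set" where
  "tadd G \<alpha> a b = {C. clopenY C \<and> boundedY C \<and>
      (\<exists>A\<in>a. \<exists>B\<in>b. A \<inter> B = {} \<and> equidec G \<alpha> (A \<union> B) C)}"

definition tzero :: "('g, 'b) monoid_scheme \<Rightarrow> ('g \<Rightarrow> 'x::topological_space \<Rightarrow> 'x) \<Rightarrow> ('x \<times> nat) set set" where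
  "tzero G \<alpha> = tcls G \<alpha> {}"

primrec tmult :: "('g, 'b) monoid_scheme \<Rightarrow> ('g \<Rightarrow> 'x::topological_space \<Rightarrow> 'x)
    \<Rightarrow> nat \<Rightarrow> ('x \<times> nat) set set \<Rightarrow> ('x \<times> nat) set set" where
  "tmult G \<alpha> 0 a = tzero G \<alpha>"
| "tmult G \<alpha> (Suc n) a = tadd G \<alpha> (tmult G \<alpha> n a) a"

definition tle :: "('g, 'b) monoid_scheme \<Rightarrow> ('g \<Rightarrow> 'x::topological_space \<Rightarrow> 'x)
    \<Rightarrow> ('x \<times> nat) set set \<Rightarrow> ('x \<times> nat) set set \<Rightarrow> bool" where
  "tle G \<alpha> a b \<longleftrightarrow> (\<exists>c\<in>Tsg G \<alpha>. b = tadd G \<alpha> a c)"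

definition almost_unperforated :: "('g, 'b) monoid_scheme \<Rightarrow> ('g \<Rightarrow> 'x::topological_space \<Rightarrow> 'x) \<Rightarrow> bool" where
  "almost_unperforated G \<alpha> \<longleftrightarrow>
     (\<forall>a\<in>Tsg G \<alpha>. \<forall>b\<in>Tsg G \<alpha>. \<forall>n::nat.
        tle G \<alpha> (tmult G \<alpha> (Suc n) a) (tmult G \<alpha> n b) \<longrightarrow> tle G \<alpha> a b)"

definition is_state :: "('g, 'b) monoid_scheme \<Rightarrow> ('g \<Rightarrow> 'x::topological_space \<Rightarrow> 'x)
    \<Rightarrow> (('x \<times> nat) set set \<Rightarrow> ennreal) \<Rightarrow> bool" where
  "is_state G \<alpha> \<mu> \<longleftrightarrow> \<mu> (tzero G \<alpha>) = 0 \<and>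
     (\<forall>a\<in>Tsg G \<alpha>. \<forall>b\<in>Tsg G \<alpha>. \<mu> (tadd G \<alpha> a b) = \<mu> a + \<mu> b)"

end

theory Submission
  imports Defs
begin


definition FY :: "('g \<Rightarrow> 'x \<Rightarrow> 'x) \<Rightarrow> 'g \<Rightarrow> (nat \<Rightarrow> nat) \<Rightarrow> 'x \<times> nat \<Rightarrow> 'x \<times> nat" where
  "FY \<alpha> g s = (\<lambda>(x, n). (\<alpha> g x, s n))"

lemma actY_FY: "actY \<alpha> g s A = FY \<alpha> g s ` A"
  by (simp add: actY_def FY_def)

locale CA =
  fixes G :: "('g, 'b) monoid_scheme" and \<alpha> :: "'g \<Rightarrow> 'x::topological_space \<Rightarrow> 'x"
  assumes ca: "continuous_action G \<alpha>"
begin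

lemma grp: "group G" using ca by (simp add: continuous_action_def)
lemma a_one: "\<alpha> \<one>\<^bsub>G\<^esub> = id" using ca by (simp add: continuous_action_def)
lemma a_mult: "g \<in> carrier G \<Longrightarrow> h \<in> carrier G \<Longrightarrow> \<alpha> (g \<otimes>\<^bsub>G\<^esub> h) = \<alpha> g \<circ> \<alpha> h"
  using ca by (simp add: continuous_action_def)
lemma a_cont: "g \<in> carrier G \<Longrightarrow> continuous_on UNIV (\<alpha> g)"
  using ca by (simp add: continuous_action_def)

lemma a_inv: "g \<in> carrier G \<Longrightarrow> \<alpha> (inv\<^bsub>G\<^esub> g) (\<alpha> g x) = x"
proof -
  assume g: "g \<in> carrier G"
  have "\<alpha> (inv\<^bsub>G\<^esub> g \<otimes>\<^bsub>G\<^esub> g) = \<alpha> (inv\<^bsub>G\<^esub> g) \<circ> \<alpha> g"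
    using g grp by (simp add: a_mult group.inv_closed)
  moreover have "inv\<^bsub>G\<^esub> g \<otimes>\<^bsub>G\<^esub> g = \<one>\<^bsub>G\<^esub>" using g grp by (simp add: group.l_inv)
  ultimately show ?thesis using a_one by (metis comp_apply id_apply)
qed

lemma FY_cont: "g \<in> carrier G \<Longrightarrow> continuous_on UNIV (FY \<alpha> g s)"
proof -
  assume g: "g \<in> carrier G"
  have "FY \<alpha> g s = (\<lambda>p. (\<alpha> g (fst p), s (snd p)))" by (auto simp: FY_def)
  moreover have "continuous_on UNIV (\<lambda>p. (\<alpha> g (fst p), s (snd p)))"
    apply (intro continuous_on_Pair)
    apply (rule continuous_on_compose2[OF a_cont[OF g] continuous_on_fst[OF continuous_on_id]]; simp)
    apply (rule continuous_on_compose2[of UNIV s, OF _ continuous_on_snd[OF continuous_on_id]]; simp)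
    done
  ultimately show ?thesis by simp
qed

lemma FY_inv: "g \<in> carrier G \<Longrightarrow> bij s \<Longrightarrow> FY \<alpha> (inv\<^bsub>G\<^esub> g) (inv_into UNIV s) (FY \<alpha> g s p) = p"
  by (cases p) (simp add: FY_def a_inv bij_is_inj)

lemma FY_inv2: "g \<in> carrier G \<Longrightarrow> bij s \<Longrightarrow> FY \<alpha> g s (FY \<alpha> (inv\<^bsub>G\<^esub> g) (inv_into UNIV s) p) = p"
proof -
  assume g: "g \<in> carrier G" and s: "bij s"
  have ig: "inv\<^bsub>G\<^esub> g \<in> carrier G" using g grp by (simp add: group.inv_closed)
  have "inv\<^bsub>G\<^esub> (inv\<^bsub>G\<^esub> g) = g" using g grp by (simp add: group.inv_inv)
  moreover have "inv_into UNIV (inv_into UNIV s) = s" using s by (simp add: inv_inv_eq)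
  moreover have "bij (inv_into UNIV s)" using s by (simp add: bij_imp_bij_inv)
  ultimately show ?thesis using FY_inv[OF ig, of "inv_into UNIV s" p] by simp
qed

lemma FY_img_eq: "g \<in> carrier G \<Longrightarrow> bij s \<Longrightarrow> FY \<alpha> g s ` A = FY \<alpha> (inv\<^bsub>G\<^esub> g) (inv_into UNIV s) -` A"
  apply (auto simp: FY_inv)
  by (metis FY_inv2 image_eqI)

lemma FY_inj: "g \<in> carrier G \<Longrightarrow> bij s \<Longrightarrow> inj (FY \<alpha> g s)"
  by (metis FY_inv injI)

lemma clopen_act: "g \<in> carrier G \<Longrightarrow> bij s \<Longrightarrow> clopenY A \<Longrightarrow> clopenY (actY \<alpha> g s A)"
proof -
  assume g: "g \<in> carrier G" and s: "bij s" and A: "clopenY A"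
  have ig: "inv\<^bsub>G\<^esub> g \<in> carrier G" using g grp by (simp add: group.inv_closed)
  show ?thesis using A unfolding clopenY_def actY_FY FY_img_eq[OF g s]
    using FY_cont[OF ig] by (auto intro: open_vimage closed_vimage)
qed

lemma act_comp: "actY \<alpha> h t (actY \<alpha> g s A) = actY \<alpha> (h \<otimes>\<^bsub>G\<^esub> g) (t \<circ> s) A"
  if "g \<in> carrier G" "h \<in> carrier G"
proof -
  have "FY \<alpha> h t (FY \<alpha> g s p) = FY \<alpha> (h \<otimes>\<^bsub>G\<^esub> g) (t \<circ> s) p" for p
    using that by (cases p) (simp add: FY_def a_mult)
  then show ?thesis by (simp add: actY_FY image_image)
qed

lemma act_one: "actY \<alpha> \<one>\<^bsub>G\<^esub> id A = A"
  by (simp add: actY_def a_one)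

lemma act_inv: "g \<in> carrier G \<Longrightarrow> bij s \<Longrightarrow> actY \<alpha> (inv\<^bsub>G\<^esub> g) (inv_into UNIV s) (actY \<alpha> g s A) = A"
  by (simp add: actY_FY image_image FY_inv)

lemma act_Int: "g \<in> carrier G \<Longrightarrow> bij s \<Longrightarrow> actY \<alpha> g s (A \<inter> B) = actY \<alpha> g s A \<inter> actY \<alpha> g s B"
  by (simp add: actY_FY image_Int FY_inj)

lemma act_mono: "A \<subseteq> B \<Longrightarrow> actY \<alpha> g s A \<subseteq> actY \<alpha> g s B"
  by (auto simp: actY_def)

lemma act_Un: "actY \<alpha> g s (A \<union> B) = actY \<alpha> g s A \<union> actY \<alpha> g s B"
  by (auto simp: actY_def)

lemma act_UN: "actY \<alpha> g s (\<Union>i\<in>I. A i) = (\<Union>i\<in>I. actY \<alpha> g s (A i))"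
  by (auto simp: actY_def)


lemma act_inv2: "g \<in> carrier G \<Longrightarrow> bij s \<Longrightarrow> actY \<alpha> g s (actY \<alpha> (inv\<^bsub>G\<^esub> g) (inv_into UNIV s) A) = A"
  by (simp add: actY_FY image_image FY_inv2)

lemma inv_closed': "g \<in> carrier G \<Longrightarrow> inv\<^bsub>G\<^esub> g \<in> carrier G"
  using grp by (simp add: group.inv_closed)

lemma m_closed': "g \<in> carrier G \<Longrightarrow> h \<in> carrier G \<Longrightarrow> h \<otimes>\<^bsub>G\<^esub> g \<in> carrier G"
  using grp by (simp add: group.subgroup_self subgroup.m_closed)

definition eqd_on :: "'i set \<Rightarrow> ('i \<Rightarrow> ('x \<times> nat) set) \<Rightarrow> ('i \<Rightarrow> 'g) \<Rightarrow> ('i \<Rightarrow> nat \<Rightarrow> nat)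
   \<Rightarrow> ('x \<times> nat) set \<Rightarrow> ('x \<times> nat) set \<Rightarrow> bool" where
  "eqd_on I P g s A B \<longleftrightarrow> finite I \<and> (\<forall>i\<in>I. clopenY (P i) \<and> g i \<in> carrier G \<and> bij (s i)) \<and>
        disjoint_family_on P I \<and> A = (\<Union>i\<in>I. P i) \<and>
        disjoint_family_on (\<lambda>i. actY \<alpha> (g i) (s i) (P i)) I \<and>
        B = (\<Union>i\<in>I. actY \<alpha> (g i) (s i) (P i))"

lemma eqd_equidec:
  assumes "eqd_on I P g s A B" shows "equidec G \<alpha> A B"
proof -
  have fin: "finite I" using assms by (simp add: eqd_on_def)
  obtain h where h: "bij_betw h {0..<card I} I" using ex_bij_betw_nat_finite[OF fin] by blast
  have h': "bij_betw h {..<card I} I" using h by (simp add: atLeast0LessThan)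
  have inj: "inj_on h {..<card I}" and im: "h ` {..<card I} = I" using h' by (auto simp: bij_betw_def)
  have U0: "(\<Union>i<card I. F (h i)) = (\<Union>i\<in>I. F i)" for F :: "_ \<Rightarrow> ('x \<times> nat) set"
  proof -
    have "(\<Union>i<card I. F (h i)) = \<Union> (F ` (h ` {..<card I}))" by (simp add: image_image)
    then show "(\<Union>i<card I. F (h i)) = (\<Union>i\<in>I. F i)" using im by simp
  qed
  have U1: "(\<Union>i<card I. P (h i)) = (\<Union>i\<in>I. P i)" by (rule U0)
  have U2: "(\<Union>i<card I. actY \<alpha> (g (h i)) (s (h i)) (P (h i))) = (\<Union>i\<in>I. actY \<alpha> (g i) (s i) (P i))"
    using U0[of "\<lambda>i. actY \<alpha> (g i) (s i) (P i)"] by simp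
  have D1: "disjoint_family_on (\<lambda>i. P (h i)) {..<card I}"
    using assms inj im unfolding eqd_on_def disjoint_family_on_def inj_on_def by (metis image_eqI)
  have D2: "disjoint_family_on (\<lambda>i. actY \<alpha> (g (h i)) (s (h i)) (P (h i))) {..<card I}"
    using assms inj im unfolding eqd_on_def disjoint_family_on_def inj_on_def by (metis image_eqI)
  have C: "\<forall>i<card I. clopenY (P (h i)) \<and> g (h i) \<in> carrier G \<and> bij (s (h i))"
    using assms im unfolding eqd_on_def by auto
  show ?thesis unfolding equidec_def
    apply (rule exI[of _ "card I"], rule exI[of _ "\<lambda>i. P (h i)"], rule exI[of _ "\<lambda>i. g (h i)"], rule exI[of _ "\<lambda>i. s (h i)"])
    using C D1 D2 U1 U2 assms unfolding eqd_on_def by auto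
qed

lemma equidec_eqd: "equidec G \<alpha> A B \<Longrightarrow> \<exists>(I::nat set) P g s. eqd_on I P g s A B"
  unfolding equidec_def eqd_on_def by blast

lemma eqd_refl: "clopenY A \<Longrightarrow> equidec G \<alpha> A A"
proof -
  assume "clopenY A"
  then have "eqd_on {0::nat} (\<lambda>_. A) (\<lambda>_. \<one>\<^bsub>G\<^esub>) (\<lambda>_. id) A A"
    unfolding eqd_on_def using grp by (simp add: act_one disjoint_family_on_def group.subgroup_self subgroup.one_closed)
  then show ?thesis by (rule eqd_equidec)
qed

lemma eqd_sym: "equidec G \<alpha> A B \<Longrightarrow> equidec G \<alpha> B A"
proof -
  assume "equidec G \<alpha> A B"
  then obtain I :: "nat set" and P g s where e: "eqd_on I P g s A B" using equidec_eqd by blast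
  let ?Q = "\<lambda>i. actY \<alpha> (g i) (s i) (P i)"
  have "eqd_on I ?Q (\<lambda>i. inv\<^bsub>G\<^esub> (g i)) (\<lambda>i. inv_into UNIV (s i)) B A"
  proof -
    have ii: "\<And>i. i \<in> I \<Longrightarrow> actY \<alpha> (inv\<^bsub>G\<^esub> (g i)) (inv_into UNIV (s i)) (?Q i) = P i"
      using e unfolding eqd_on_def by (simp add: act_inv)
    have "disjoint_family_on (\<lambda>i. actY \<alpha> (inv\<^bsub>G\<^esub> (g i)) (inv_into UNIV (s i)) (?Q i)) I"
      using e ii unfolding eqd_on_def disjoint_family_on_def by simp
    moreover have "(\<Union>i\<in>I. actY \<alpha> (inv\<^bsub>G\<^esub> (g i)) (inv_into UNIV (s i)) (?Q i)) = A"
      using e ii unfolding eqd_on_def by simp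
    moreover have "\<forall>i\<in>I. clopenY (?Q i) \<and> inv\<^bsub>G\<^esub> (g i) \<in> carrier G \<and> bij (inv_into UNIV (s i))"
      using e unfolding eqd_on_def by (simp add: clopen_act inv_closed' bij_imp_bij_inv)
    ultimately show ?thesis using e unfolding eqd_on_def by blast
  qed
  then show ?thesis by (rule eqd_equidec)
qed


lemma clopen_Int: "clopenY A \<Longrightarrow> clopenY B \<Longrightarrow> clopenY (A \<inter> B)"
  by (auto simp: clopenY_def)

lemma clopen_Un: "clopenY A \<Longrightarrow> clopenY B \<Longrightarrow> clopenY (A \<union> B)"
  by (auto simp: clopenY_def)

lemma eqd_trans:
  assumes AB: "equidec G \<alpha> A B" and BC: "equidec G \<alpha> B C"
  shows "equidec G \<alpha> A C"
proof -
  obtain I :: "nat set" and P g s where e1: "eqd_on I P g s A B" using equidec_eqd[OF AB] by blast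
  obtain J :: "nat set" and Q h t where e2: "eqd_on J Q h t B C" using equidec_eqd[OF BC] by blast
  define \<phi> where "\<phi> i X = actY \<alpha> (g i) (s i) X" for i X
  define \<phi>i where "\<phi>i i X = actY \<alpha> (inv\<^bsub>G\<^esub> (g i)) (inv_into UNIV (s i)) X" for i X
  define \<psi> where "\<psi> j X = actY \<alpha> (h j) (t j) X" for j X
  define R where "R p = P (fst p) \<inter> \<phi>i (fst p) (Q (snd p))" for p
  define g' where "g' p = h (snd p) \<otimes>\<^bsub>G\<^esub> g (fst p)" for p
  define s' where "s' p = t (snd p) \<circ> s (fst p)" for p
  have gI: "\<And>i. i \<in> I \<Longrightarrow> g i \<in> carrier G \<and> bij (s i) \<and> clopenY (P i)" using e1 by (simp add: eqd_on_def)
  have hJ: "\<And>j. j \<in> J \<Longrightarrow> h j \<in> carrier G \<and> bij (t j) \<and> clopenY (Q j)" using e2 by (simp add: eqd_on_def)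
  have A: "A = (\<Union>i\<in>I. P i)" and B: "B = (\<Union>i\<in>I. \<phi> i (P i))" and B2: "B = (\<Union>j\<in>J. Q j)"
    and C: "C = (\<Union>j\<in>J. \<psi> j (Q j))"
    using e1 e2 by (simp_all add: eqd_on_def \<phi>_def \<psi>_def)
  have dP: "disjoint_family_on P I" and d\<phi>: "disjoint_family_on (\<lambda>i. \<phi> i (P i)) I"
    and dQ: "disjoint_family_on Q J" and d\<psi>: "disjoint_family_on (\<lambda>j. \<psi> j (Q j)) J"
    using e1 e2 by (simp_all add: eqd_on_def \<phi>_def \<psi>_def)
  have k1: "\<phi> i (R (i, j)) = \<phi> i (P i) \<inter> Q j" if "i \<in> I" for i j
    using gI[OF that] by (simp add: R_def \<phi>_def \<phi>i_def act_Int act_inv2)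
  have k2: "actY \<alpha> (g' (i, j)) (s' (i, j)) (R (i, j)) = \<psi> j (\<phi> i (P i) \<inter> Q j)" if "i \<in> I" "j \<in> J" for i j
    using gI[OF that(1)] hJ[OF that(2)] k1[OF that(1)]
    by (simp add: g'_def s'_def \<psi>_def \<phi>_def act_comp[symmetric])
  have k3: "clopenY (R p)" if "p \<in> I \<times> J" for p
    using that gI hJ by (auto simp: R_def \<phi>i_def intro!: clopen_Int clopen_act inv_closed' bij_imp_bij_inv)
  have k4': "R (i, j) \<inter> R (i', j') = {}"
    if p: "i \<in> I" "j \<in> J" "i' \<in> I" "j' \<in> J" "(i, j) \<noteq> (i', j')" for i j i' j'
  proof -
    show "R (i, j) \<inter> R (i', j') = {}"
    proof (cases "i = i'")
      case True
      then have "j \<noteq> j'" using p by simp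
      then have "Q j \<inter> Q j' = {}" using dQ p by (simp add: disjoint_family_on_def)
      then have "\<phi>i i (Q j) \<inter> \<phi>i i (Q j') = {}" using gI[OF p(1)]
        by (metis \<phi>i_def act_Int inv_closed' bij_imp_bij_inv image_empty actY_FY)
      then show ?thesis using True by (auto simp: R_def)
    next
      case False
      then have "P i \<inter> P i' = {}" using dP p by (simp add: disjoint_family_on_def)
      then show ?thesis by (auto simp: R_def)
    qed
  qed
  have k4: "disjoint_family_on R (I \<times> J)"
    unfolding disjoint_family_on_def using k4' by auto
  have k5: "A = (\<Union>p\<in>I \<times> J. R p)"
  proof -
    have "P i \<subseteq> \<phi>i i B" if "i \<in> I" for i
    proof -
      have "\<phi> i (P i) \<subseteq> B" using B that by auto
      then have "\<phi>i i (\<phi> i (P i)) \<subseteq> \<phi>i i B" by (simp add: \<phi>i_def act_mono)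
      then show ?thesis using gI[OF that] by (simp add: \<phi>i_def \<phi>_def act_inv)
    qed
    then have "A = (\<Union>i\<in>I. P i \<inter> \<phi>i i B)" using A by auto
    also have "\<dots> = (\<Union>i\<in>I. \<Union>j\<in>J. P i \<inter> \<phi>i i (Q j))" by (simp add: B2 \<phi>i_def act_UN)
    also have "\<dots> = (\<Union>p\<in>I \<times> J. R p)" by (auto simp: R_def; blast)
    finally show ?thesis .
  qed
  have k6': "actY \<alpha> (g' (i, j)) (s' (i, j)) (R (i, j)) \<inter> actY \<alpha> (g' (i', j')) (s' (i', j')) (R (i', j')) = {}"
    if p: "i \<in> I" "j \<in> J" "i' \<in> I" "j' \<in> J" "(i, j) \<noteq> (i', j')" for i j i' j'
  proof -
    show "actY \<alpha> (g' (i, j)) (s' (i, j)) (R (i, j)) \<inter> actY \<alpha> (g' (i', j')) (s' (i', j')) (R (i', j')) = {}"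
      unfolding k2[OF p(1,2)] k2[OF p(3,4)]
    proof (cases "j = j'")
      case True
      then have "i \<noteq> i'" using p by simp
      then have "\<phi> i (P i) \<inter> \<phi> i' (P i') = {}" using d\<phi> p by (simp add: disjoint_family_on_def)
      then have "\<psi> j ((\<phi> i (P i) \<inter> Q j) \<inter> (\<phi> i' (P i') \<inter> Q j)) = {}"
        by (simp add: \<psi>_def actY_def; blast)
      then show "\<psi> j (\<phi> i (P i) \<inter> Q j) \<inter> \<psi> j' (\<phi> i' (P i') \<inter> Q j') = {}"
        using True hJ[OF p(2)] by (simp add: \<psi>_def act_Int)
    next
      case False
      then have "\<psi> j (Q j) \<inter> \<psi> j' (Q j') = {}" using d\<psi> p by (simp add: disjoint_family_on_def)
      then show "\<psi> j (\<phi> i (P i) \<inter> Q j) \<inter> \<psi> j' (\<phi> i' (P i') \<inter> Q j') = {}"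
        unfolding \<psi>_def using act_mono[of "\<phi> i (P i) \<inter> Q j" "Q j"] act_mono[of "\<phi> i' (P i') \<inter> Q j'" "Q j'"]
        by blast
    qed
  qed
  have k6: "disjoint_family_on (\<lambda>p. actY \<alpha> (g' p) (s' p) (R p)) (I \<times> J)"
    unfolding disjoint_family_on_def using k6' by auto
  have k7: "C = (\<Union>p\<in>I \<times> J. actY \<alpha> (g' p) (s' p) (R p))"
  proof -
    have "C = (\<Union>j\<in>J. \<psi> j (B \<inter> Q j))" proof -
      have "\<And>j. j \<in> J \<Longrightarrow> B \<inter> Q j = Q j" using B2 by auto
      then show ?thesis using C by simp
    qed
    also have "\<dots> = (\<Union>j\<in>J. \<Union>i\<in>I. \<psi> j (\<phi> i (P i) \<inter> Q j))" proof -
      have "\<And>j. B \<inter> Q j = (\<Union>i\<in>I. \<phi> i (P i) \<inter> Q j)" using B by auto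
      then have "\<And>j. \<psi> j (B \<inter> Q j) = (\<Union>i\<in>I. \<psi> j (\<phi> i (P i) \<inter> Q j))"
        unfolding \<psi>_def by (simp only: act_UN)
      then show ?thesis by simp
    qed
    also have "\<dots> = (\<Union>p\<in>I \<times> J. actY \<alpha> (g' p) (s' p) (R p))" using k2 by (auto; blast)
    finally show ?thesis .
  qed
  have "eqd_on (I \<times> J) R g' s' A C"
    unfolding eqd_on_def
    using e1 e2 k3 k4 k5 k6 k7 gI hJ
    by (auto simp: eqd_on_def g'_def s'_def intro: m_closed' bij_comp)
  then show ?thesis by (rule eqd_equidec)
qed


lemma disj_sum:
  assumes "disjoint_family_on F I" "disjoint_family_on H J" "\<And>i j. i \<in> I \<Longrightarrow> j \<in> J \<Longrightarrow> F i \<inter> H j = {}"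
  shows "disjoint_family_on (case_sum F H) (I <+> J)"
  unfolding disjoint_family_on_def
proof (intro ballI impI)
  fix m n assume mn: "m \<in> I <+> J" "n \<in> I <+> J" "m \<noteq> n"
  show "case_sum F H m \<inter> case_sum F H n = {}"
  proof (cases m)
    case (Inl i)
    show ?thesis
    proof (cases n)
      case (Inl i') then show ?thesis using \<open>m = Inl i\<close> mn assms(1) by (auto simp: disjoint_family_on_def)
    next
      case (Inr j) then show ?thesis using \<open>m = Inl i\<close> mn assms(3) by auto
    qed
  next
    case (Inr j)
    show ?thesis
    proof (cases n)
      case (Inl i) then show ?thesis using \<open>m = Inr j\<close> mn assms(3) by auto
    next
      case (Inr j') then show ?thesis using \<open>m = Inr j\<close> mn assms(2) by (auto simp: disjoint_family_on_def)
    qed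
  qed
qed

lemma eqd_union:
  assumes AA: "equidec G \<alpha> A A'" and BB: "equidec G \<alpha> B B'"
    and d1: "A \<inter> B = {}" and d2: "A' \<inter> B' = {}"
  shows "equidec G \<alpha> (A \<union> B) (A' \<union> B')"
proof -
  obtain I :: "nat set" and P g s where e1: "eqd_on I P g s A A'" using equidec_eqd[OF AA] by blast
  obtain J :: "nat set" and Q h t where e2: "eqd_on J Q h t B B'" using equidec_eqd[OF BB] by blast
  let ?K = "I <+> J"
  let ?R = "case_sum P Q" and ?g = "case_sum g h" and ?s = "case_sum s t"
  have sub1: "\<And>i. i \<in> I \<Longrightarrow> P i \<subseteq> A" "\<And>i. i \<in> I \<Longrightarrow> actY \<alpha> (g i) (s i) (P i) \<subseteq> A'"
    using e1 by (auto simp: eqd_on_def)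
  have sub2: "\<And>j. j \<in> J \<Longrightarrow> Q j \<subseteq> B" "\<And>j. j \<in> J \<Longrightarrow> actY \<alpha> (h j) (t j) (Q j) \<subseteq> B'"
    using e2 by (auto simp: eqd_on_def)
  have x1: "P i \<inter> Q j = {}" if "i \<in> I" "j \<in> J" for i j using sub1 sub2 d1 that by blast
  have x2: "actY \<alpha> (g i) (s i) (P i) \<inter> actY \<alpha> (h j) (t j) (Q j) = {}" if "i \<in> I" "j \<in> J" for i j
    using sub1 sub2 d2 that by blast
  have D1: "disjoint_family_on ?R ?K"
    using e1 e2 x1 by (intro disj_sum) (simp_all add: eqd_on_def)
  have eqf: "(\<lambda>k. actY \<alpha> (?g k) (?s k) (?R k)) = case_sum (\<lambda>i. actY \<alpha> (g i) (s i) (P i)) (\<lambda>j. actY \<alpha> (h j) (t j) (Q j))"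
    by (rule ext) (simp split: sum.split)
  have D2: "disjoint_family_on (\<lambda>k. actY \<alpha> (?g k) (?s k) (?R k)) ?K"
    unfolding eqf using e1 e2 x2 by (intro disj_sum) (simp_all add: eqd_on_def)
  have "eqd_on ?K ?R ?g ?s (A \<union> B) (A' \<union> B')"
    unfolding eqd_on_def
    using e1 e2 D1 D2 unfolding eqd_on_def by (auto simp: UN_Un Plus_def)
  then show ?thesis by (rule eqd_equidec)
qed

lemma boundedY_iff: "boundedY A \<longleftrightarrow> (\<exists>N. A \<subseteq> UNIV \<times> {..<N})"
  unfolding boundedY_def
proof
  assume "\<exists>N. \<forall>n\<ge>N. A \<inter> (UNIV \<times> {n}) = {}"
  then obtain N where N: "\<forall>n\<ge>N. A \<inter> (UNIV \<times> {n}) = {}" by blast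
  have "A \<subseteq> UNIV \<times> {..<N}"
  proof
    fix p assume "p \<in> A"
    then obtain x n where p: "p = (x, n)" "(x, n) \<in> A" by (cases p) auto
    have "\<not> n \<ge> N" using N p(2) by blast
    then show "p \<in> UNIV \<times> {..<N}" using p by simp
  qed
  then show "\<exists>N. A \<subseteq> UNIV \<times> {..<N}" by blast
next
  assume "\<exists>N. A \<subseteq> UNIV \<times> {..<N}"
  then obtain N where "A \<subseteq> UNIV \<times> {..<N}" by blast
  then show "\<exists>N. \<forall>n\<ge>N. A \<inter> (UNIV \<times> {n}) = {}" by (intro exI[of _ N]) auto
qed

lemma bounded_Un: "boundedY A \<Longrightarrow> boundedY B \<Longrightarrow> boundedY (A \<union> B)"
proof -
  assume "boundedY A" "boundedY B"
  then obtain N M where "A \<subseteq> UNIV \<times> {..<N}" "B \<subseteq> UNIV \<times> {..<M}" by (auto simp: boundedY_iff)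
  then have "A \<union> B \<subseteq> UNIV \<times> {..<max N M}" by auto
  then show ?thesis by (auto simp: boundedY_iff)
qed

lemma bounded_empty: "boundedY {}" by (auto simp: boundedY_iff)
lemma clopen_empty: "clopenY {}" by (auto simp: clopenY_def)

lemma shift_disjoint:
  assumes "clopenY A" "boundedY A" "clopenY B" "boundedY B"
  shows "\<exists>B'. clopenY B' \<and> boundedY B' \<and> equidec G \<alpha> B B' \<and> A \<inter> B' = {}"
proof -
  obtain N1 N2 where "A \<subseteq> UNIV \<times> {..<N1}" "B \<subseteq> UNIV \<times> {..<N2}" using assms by (auto simp: boundedY_iff)
  then have AN: "A \<subseteq> UNIV \<times> {..<N1+N2}" and BN: "B \<subseteq> UNIV \<times> {..<N1+N2}" by auto
  define N where "N = N1 + N2"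
  define sw where "sw n = (if n < N then n + N else if n < 2 * N then n - N else n)" for n
  have swsw: "sw \<circ> sw = id" by (auto simp: sw_def fun_eq_iff)
  have bsw: "bij sw" by (rule o_bij[OF swsw swsw])
  have one: "\<one>\<^bsub>G\<^esub> \<in> carrier G" using grp by (simp add: group.subgroup_self subgroup.one_closed)
  define B' where "B' = actY \<alpha> \<one>\<^bsub>G\<^esub> sw B"
  have e: "eqd_on {0::nat} (\<lambda>_. B) (\<lambda>_. \<one>\<^bsub>G\<^esub>) (\<lambda>_. sw) B B'"
    unfolding eqd_on_def B'_def using assms one bsw by (simp add: disjoint_family_on_def)
  have B'sub: "B' \<subseteq> UNIV \<times> {N..<2*N}"
    using BN unfolding B'_def actY_def N_def[symmetric] by (auto simp: sw_def a_one)
  show ?thesis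
  proof (intro exI conjI)
    show "clopenY B'" unfolding B'_def using clopen_act[OF one bsw] assms by simp
    have "B' \<subseteq> UNIV \<times> {..<2*N}" using B'sub by auto
    then show "boundedY B'" unfolding boundedY_iff by blast
    show "equidec G \<alpha> B B'" using e by (rule eqd_equidec)
    show "A \<inter> B' = {}" using AN B'sub unfolding N_def[symmetric] by fastforce
  qed
qed

lemma tcls_mem: "clopenY A \<Longrightarrow> boundedY A \<Longrightarrow> A \<in> tcls G \<alpha> A"
  by (simp add: tcls_def eqd_refl)

lemma tcls_eq: "equidec G \<alpha> A C \<Longrightarrow> tcls G \<alpha> A = tcls G \<alpha> C"
  unfolding tcls_def using eqd_trans eqd_sym by blast

lemma Tsg_E: "a \<in> Tsg G \<alpha> \<Longrightarrow> (\<And>A. clopenY A \<Longrightarrow> boundedY A \<Longrightarrow> a = tcls G \<alpha> A \<Longrightarrow> P) \<Longrightarrow> P"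
  unfolding Tsg_def by blast

lemma Tsg_I: "clopenY A \<Longrightarrow> boundedY A \<Longrightarrow> tcls G \<alpha> A \<in> Tsg G \<alpha>"
  unfolding Tsg_def by blast

lemma tadd_cls:
  assumes "clopenY A" "boundedY A" "clopenY B" "boundedY B" "A \<inter> B = {}"
  shows "tadd G \<alpha> (tcls G \<alpha> A) (tcls G \<alpha> B) = tcls G \<alpha> (A \<union> B)"
proof (rule Set.set_eqI)
  fix C
  show "C \<in> tadd G \<alpha> (tcls G \<alpha> A) (tcls G \<alpha> B) \<longleftrightarrow> C \<in> tcls G \<alpha> (A \<union> B)"
  proof
    assume "C \<in> tadd G \<alpha> (tcls G \<alpha> A) (tcls G \<alpha> B)"
    then obtain A' B' where C: "clopenY C" "boundedY C" and A': "A' \<in> tcls G \<alpha> A" and B': "B' \<in> tcls G \<alpha> B"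
      and d: "A' \<inter> B' = {}" and e: "equidec G \<alpha> (A' \<union> B') C" unfolding tadd_def by blast
    have "equidec G \<alpha> (A \<union> B) (A' \<union> B')"
      using A' B' d assms(5) by (intro eqd_union) (auto simp: tcls_def)
    then have "equidec G \<alpha> (A \<union> B) C" using e by (rule eqd_trans)
    then show "C \<in> tcls G \<alpha> (A \<union> B)" using C by (simp add: tcls_def)
  next
    assume "C \<in> tcls G \<alpha> (A \<union> B)"
    then show "C \<in> tadd G \<alpha> (tcls G \<alpha> A) (tcls G \<alpha> B)"
      unfolding tadd_def using assms tcls_mem by (auto simp: tcls_def)
  qed
qed

lemma tadd_comm: "tadd G \<alpha> a b = tadd G \<alpha> b a"
  unfolding tadd_def by (rule Collect_cong) (metis Int_commute Un_commute)

lemma tadd_closed: "a \<in> Tsg G \<alpha> \<Longrightarrow> b \<in> Tsg G \<alpha> \<Longrightarrow> tadd G \<alpha> a b \<in> Tsg G \<alpha>"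
proof -
  assume a: "a \<in> Tsg G \<alpha>" and b: "b \<in> Tsg G \<alpha>"
  obtain A where A: "clopenY A" "boundedY A" "a = tcls G \<alpha> A" using a by (rule Tsg_E)
  obtain B where B: "clopenY B" "boundedY B" "b = tcls G \<alpha> B" using b by (rule Tsg_E)
  obtain B' where B': "clopenY B'" "boundedY B'" "equidec G \<alpha> B B'" "A \<inter> B' = {}"
    using shift_disjoint[OF A(1,2) B(1,2)] by blast
  have "tadd G \<alpha> a b = tcls G \<alpha> (A \<union> B')"
    using A B B' tcls_eq[OF B'(3)] tadd_cls by simp
  then show ?thesis using A B' by (simp add: Tsg_I clopen_Un bounded_Un)
qed

lemma tadd_assoc:
  assumes "a \<in> Tsg G \<alpha>" "b \<in> Tsg G \<alpha>" "c \<in> Tsg G \<alpha>"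
  shows "tadd G \<alpha> (tadd G \<alpha> a b) c = tadd G \<alpha> a (tadd G \<alpha> b c)"
proof -
  obtain A where A: "clopenY A" "boundedY A" "a = tcls G \<alpha> A" using assms(1) by (rule Tsg_E)
  obtain B where B: "clopenY B" "boundedY B" "b = tcls G \<alpha> B" using assms(2) by (rule Tsg_E)
  obtain C where C: "clopenY C" "boundedY C" "c = tcls G \<alpha> C" using assms(3) by (rule Tsg_E)
  obtain B' where B': "clopenY B'" "boundedY B'" "equidec G \<alpha> B B'" "A \<inter> B' = {}"
    using shift_disjoint[OF A(1,2) B(1,2)] by blast
  obtain C' where C': "clopenY C'" "boundedY C'" "equidec G \<alpha> C C'" "(A \<union> B') \<inter> C' = {}"
    using shift_disjoint[OF clopen_Un[OF A(1) B'(1)] bounded_Un[OF A(2) B'(2)] C(1,2)] by blast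
  have b': "b = tcls G \<alpha> B'" using B tcls_eq[OF B'(3)] by simp
  have c': "c = tcls G \<alpha> C'" using C tcls_eq[OF C'(3)] by simp
  have "tadd G \<alpha> (tadd G \<alpha> a b) c = tcls G \<alpha> ((A \<union> B') \<union> C')"
    using A B' C' b' c' by (simp add: tadd_cls clopen_Un bounded_Un)
  moreover have "tadd G \<alpha> a (tadd G \<alpha> b c) = tcls G \<alpha> (A \<union> (B' \<union> C'))"
    using A B' C' b' c' by (simp add: tadd_cls clopen_Un bounded_Un Int_Un_distrib Int_Un_distrib2)
  ultimately show ?thesis by (simp add: Un_assoc)
qed

lemma tzero_l: "a \<in> Tsg G \<alpha> \<Longrightarrow> tadd G \<alpha> (tzero G \<alpha>) a = a"
proof -
  assume a: "a \<in> Tsg G \<alpha>"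
  obtain A where A: "clopenY A" "boundedY A" "a = tcls G \<alpha> A" using a by (rule Tsg_E)
  show ?thesis unfolding tzero_def using A tadd_cls[of "{}" A] by (simp add: clopen_empty bounded_empty)
qed

lemma T_comm_monoid: "comm_monoid \<lparr>carrier = Tsg G \<alpha>, mult = tadd G \<alpha>, one = tzero G \<alpha>\<rparr>"
proof (rule comm_monoidI, goal_cases)
  case 1 then show ?case by (simp add: tadd_closed)
next
  case 2 then show ?case by (simp add: tzero_def Tsg_I clopen_empty bounded_empty)
next
  case 3 then show ?case by (simp add: tadd_assoc)
next
  case 4 then show ?case by (simp add: tzero_l)
next
  case 5 then show ?case by simp (rule tadd_comm)
qed

end



definition mle :: "('a, 'm) monoid_scheme \<Rightarrow> 'a \<Rightarrow> 'a \<Rightarrow> bool" where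
  "mle M x y \<longleftrightarrow> (\<exists>c\<in>carrier M. y = x \<otimes>\<^bsub>M\<^esub> c)"

context comm_monoid
begin

lemma mle_refl: "x \<in> carrier G \<Longrightarrow> mle G x x"
  unfolding mle_def by (rule bexI[of _ \<one>]) auto

lemma mle_trans: "mle G x y \<Longrightarrow> mle G y z \<Longrightarrow> x \<in> carrier G \<Longrightarrow> mle G x z"
  unfolding mle_def by (metis m_assoc m_closed)

lemma mle_multI: "x \<in> carrier G \<Longrightarrow> c \<in> carrier G \<Longrightarrow> mle G x (x \<otimes> c)"
  unfolding mle_def by blast

lemma mle_multI2: "x \<in> carrier G \<Longrightarrow> c \<in> carrier G \<Longrightarrow> mle G x (c \<otimes> x)"
  unfolding mle_def using m_comm by blast

lemma mle_mono: "mle G x y \<Longrightarrow> mle G x' y' \<Longrightarrow> x \<in> carrier G \<Longrightarrow> x' \<in> carrier G \<Longrightarrow> mle G (x \<otimes> x') (y \<otimes> y')"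
  unfolding mle_def
proof (elim bexE)
  fix c c' assume c: "c \<in> carrier G" "y = x \<otimes> c" and c': "c' \<in> carrier G" "y' = x' \<otimes> c'"
  assume x: "x \<in> carrier G" "x' \<in> carrier G"
  have "y \<otimes> y' = (x \<otimes> x') \<otimes> (c \<otimes> c')" using c c' x by (simp add: m_ac)
  then show "\<exists>c\<in>carrier G. y \<otimes> y' = x \<otimes> x' \<otimes> c" using c c' by blast
qed

lemma mle_pow: "mle G x y \<Longrightarrow> x \<in> carrier G \<Longrightarrow> mle G (x [^] (n::nat)) (y [^] n)"
  unfolding mle_def
proof (elim bexE)
  fix c assume c: "c \<in> carrier G" "y = x \<otimes> c" and x: "x \<in> carrier G"
  have "y [^] n = x [^] n \<otimes> c [^] n" using c x by (simp add: nat_pow_distrib)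
  then show "\<exists>c\<in>carrier G. y [^] n = x [^] n \<otimes> c" using c by blast
qed

lemma pow_mle: "m \<le> n \<Longrightarrow> b \<in> carrier G \<Longrightarrow> mle G (b [^] (m::nat)) (b [^] n)"
  unfolding mle_def
  by (rule bexI[of _ "b [^] (n - m)"]) (auto simp: nat_pow_mult)

lemma id1: "x \<in> carrier G \<Longrightarrow> y \<in> carrier G \<Longrightarrow> z \<in> carrier G \<Longrightarrow>
  (x \<otimes> y) [^] (n * n') \<otimes> z [^] (n' * m + n * (m'::nat)) = (x [^] n \<otimes> z [^] m) [^] n' \<otimes> (y [^] n' \<otimes> z [^] m') [^] (n::nat)"
  by (simp add: nat_pow_distrib nat_pow_pow nat_pow_mult[symmetric] m_ac mult.commute)

lemma id2: "x \<in> carrier G \<Longrightarrow> z \<in> carrier G \<Longrightarrow>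
  (x [^] n) [^] (k::nat) \<otimes> z [^] (n * (m::nat)) = (x [^] k \<otimes> z [^] m) [^] (n::nat)"
  by (simp add: nat_pow_distrib nat_pow_pow mult.commute)

lemma id3: "x \<in> carrier G \<Longrightarrow> z \<in> carrier G \<Longrightarrow> a \<in> carrier G \<Longrightarrow>
  (x \<otimes> a [^] (m'::nat)) [^] k \<otimes> z [^] (n::nat) = (x [^] k \<otimes> z [^] n) \<otimes> a [^] (m' * (k::nat))"
  apply (simp add: nat_pow_distrib nat_pow_pow m_assoc)
  apply (simp add: m_comm)
  done

lemma id4: "b \<in> carrier G \<Longrightarrow> b [^] (n' * j + n * j') = (b [^] (j::nat)) [^] (n'::nat) \<otimes> (b [^] (j'::nat)) [^] (n::nat)"
  by (simp add: nat_pow_pow nat_pow_mult mult.commute)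

lemma mle_carrier: "mle G x y \<Longrightarrow> x \<in> carrier G \<Longrightarrow> y \<in> carrier G"
  unfolding mle_def by auto

end

lemma inf_add_le:
  fixes X Y :: "real set"
  assumes "X \<noteq> {}" "Y \<noteq> {}" "\<And>t. t \<in> X \<Longrightarrow> 0 \<le> t" "\<And>t. t \<in> Y \<Longrightarrow> 0 \<le> t"
    and "\<And>s t. s \<in> X \<Longrightarrow> t \<in> Y \<Longrightarrow> c \<le> s + t"
  shows "c \<le> Inf X + Inf Y"
proof -
  have "c - t \<le> Inf X" if "t \<in> Y" for t
    using assms that by (intro cInf_greatest) force+
  then have "c - Inf X \<le> t" if "t \<in> Y" for t using that by force
  then have "c - Inf X \<le> Inf Y" using assms by (intro cInf_greatest) auto
  then show ?thesis by simp
qed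

lemma inf_lower0:
  fixes X :: "real set"
  assumes "t \<in> X" "\<And>t. t \<in> X \<Longrightarrow> 0 \<le> t"
  shows "Inf X \<le> t"
  using assms by (intro cInf_lower) (auto intro!: bdd_belowI[of _ 0])

lemma inf_ge:
  fixes X :: "real set"
  assumes "X \<noteq> {}" "\<And>t. t \<in> X \<Longrightarrow> c \<le> t"
  shows "c \<le> Inf X"
  using assms by (intro cInf_greatest) auto


locale GH = comm_monoid G for G (structure) +
  fixes a b :: 'a and k :: nat
  assumes a: "a \<in> carrier G" and b: "b \<in> carrier G"
    and ak: "mle G a (b [^] k)" and nab: "\<not> mle G a b"
    and AU: "\<And>n. mle G (a [^] Suc n) (b [^] n) \<Longrightarrow> mle G a b"
begin

definition I where "I = {x \<in> carrier G. \<exists>j::nat. mle G x (b [^] j)}"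

lemma I_carrier: "x \<in> I \<Longrightarrow> x \<in> carrier G" by (simp add: I_def)

lemma I_mult: "x \<in> I \<Longrightarrow> y \<in> I \<Longrightarrow> x \<otimes> y \<in> I"
proof -
  assume x: "x \<in> I" and y: "y \<in> I"
  have xc: "x \<in> carrier G" and yc: "y \<in> carrier G" using x y by (auto simp: I_def)
  obtain j :: nat where j: "mle G x (b [^] j)" using x by (auto simp: I_def)
  obtain j' :: nat where j': "mle G y (b [^] j')" using y by (auto simp: I_def)
  from j j' xc yc have "mle G (x \<otimes> y) (b [^] j \<otimes> b [^] j')" by (simp add: mle_mono)
  then show ?thesis using \<open>x \<in> carrier G\<close> \<open>y \<in> carrier G\<close> b by (auto simp: I_def nat_pow_mult)
qed

lemma I_down: "mle G x y \<Longrightarrow> x \<in> carrier G \<Longrightarrow> y \<in> I \<Longrightarrow> x \<in> I"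
  unfolding I_def using mle_trans by blast

lemma I_pow: "x \<in> I \<Longrightarrow> x [^] (n::nat) \<in> I"
proof (induction n)
  case 0 then show ?case using b by (auto simp: I_def intro!: exI[of _ 0] mle_refl)
next
  case (Suc n) then show ?case by (simp add: I_mult)
qed

lemma I_one: "\<one> \<in> I" unfolding I_def using mle_refl[of \<one>] by (auto intro!: exI[of _ 0])

lemma b_I: "b \<in> I" using b by (auto simp: I_def intro!: exI[of _ 1] mle_refl)
lemma a_I: "a \<in> I" using a ak by (auto simp: I_def)

lemma I_left: "x \<in> carrier G \<Longrightarrow> y \<in> carrier G \<Longrightarrow> x \<otimes> y \<in> I \<Longrightarrow> x \<in> I"
  using I_down mle_multI by blast

lemma I_right: "x \<in> carrier G \<Longrightarrow> y \<in> carrier G \<Longrightarrow> x \<otimes> y \<in> I \<Longrightarrow> y \<in> I"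
  using I_down mle_multI2 by blast

lemma key_nonneg:
  assumes x: "x \<in> carrier G" and le: "mle G (x [^] (n::nat) \<otimes> a [^] (m::nat)) (b [^] (j::nat))"
  shows "m \<le> j"
proof (rule ccontr)
  assume "\<not> m \<le> j"
  then obtain N where N: "m = Suc N" "j \<le> N" by (cases m) auto
  have "mle G (a [^] m) (x [^] n \<otimes> a [^] m)" using a x by (simp add: mle_multI2)
  then have "mle G (a [^] m) (b [^] j)" using le a by (blast intro: mle_trans)
  then have "mle G (a [^] Suc N) (b [^] N)" using N pow_mle[OF N(2) b] a by (blast intro: mle_trans)
  then show False using AU nab by blast
qed

definition Bset where
  "Bset x = {(real j - real m) / real n | n m j. n \<ge> 1 \<and> mle G (x [^] n \<otimes> a [^] m) (b [^] j)}"

definition q0 where "q0 x = (if x \<in> I then Inf (Bset x) else 0)"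

lemma Bset_nonneg: "x \<in> carrier G \<Longrightarrow> t \<in> Bset x \<Longrightarrow> 0 \<le> t"
  unfolding Bset_def using key_nonneg by fastforce

lemma Bset_ne: "x \<in> I \<Longrightarrow> Bset x \<noteq> {}"
proof -
  assume "x \<in> I"
  then have xc: "x \<in> carrier G" by (auto simp: I_def)
  obtain j :: nat where "mle G x (b [^] j)" using \<open>x \<in> I\<close> by (auto simp: I_def)
  then have "mle G (x [^] (1::nat) \<otimes> a [^] (0::nat)) (b [^] j)" using xc by simp
  then show ?thesis unfolding Bset_def by blast
qed

lemma BsetI: "n \<ge> 1 \<Longrightarrow> mle G (x [^] n \<otimes> a [^] m) (b [^] j) \<Longrightarrow> (real j - real m) / real n \<in> Bset x"
  unfolding Bset_def by blast

lemma q0_le: "x \<in> I \<Longrightarrow> t \<in> Bset x \<Longrightarrow> q0 x \<le> t"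
proof -
  assume x: "x \<in> I" and t: "t \<in> Bset x"
  have "Inf (Bset x) \<le> t" using t Bset_nonneg I_carrier[OF x] by (intro inf_lower0) auto
  then show ?thesis using x by (simp add: q0_def)
qed

lemma q0_ge: "x \<in> I \<Longrightarrow> (\<And>t. t \<in> Bset x \<Longrightarrow> c \<le> t) \<Longrightarrow> c \<le> q0 x"
  unfolding q0_def using Bset_ne by (simp add: inf_ge)

lemma q0_nonneg: "x \<in> I \<Longrightarrow> 0 \<le> q0 x"
  using q0_ge Bset_nonneg I_carrier by blast

lemma q0_subadd:
  assumes x: "x \<in> I" and y: "y \<in> I"
  shows "q0 (x \<otimes> y) \<le> q0 x + q0 y"
  unfolding q0_def using x y
proof (simp add: I_mult, intro inf_add_le)
  show "Bset x \<noteq> {}" "Bset y \<noteq> {}" using x y by (simp_all add: Bset_ne)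
  show "\<And>t. t \<in> Bset x \<Longrightarrow> 0 \<le> t" "\<And>t. t \<in> Bset y \<Longrightarrow> 0 \<le> t"
    using x y I_carrier Bset_nonneg by blast+
  fix s t assume s: "s \<in> Bset x" and t: "t \<in> Bset y"
  obtain n m j where s': "s = (real j - real m) / real n" "n \<ge> 1" "mle G (x [^] n \<otimes> a [^] m) (b [^] j)"
    using s unfolding Bset_def by blast
  obtain n' m' j' where t': "t = (real j' - real m') / real n'" "n' \<ge> 1" "mle G (y [^] n' \<otimes> a [^] m') (b [^] j')"
    using t unfolding Bset_def by blast
  have xc: "x \<in> carrier G" and yc: "y \<in> carrier G" using x y I_carrier by auto
  have "mle G ((x [^] n \<otimes> a [^] m) [^] n' \<otimes> (y [^] n' \<otimes> a [^] m') [^] n) ((b [^] j) [^] n' \<otimes> (b [^] j') [^] n)"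
    using s'(3) t'(3) xc yc a by (intro mle_mono mle_pow) auto
  then have "mle G ((x \<otimes> y) [^] (n * n') \<otimes> a [^] (n' * m + n * m')) (b [^] (n' * j + n * j'))"
    using id1[OF xc yc a] id4[OF b] by simp
  then have "(real (n' * j + n * j') - real (n' * m + n * m')) / real (n * n') \<in> Bset (x \<otimes> y)"
    using s'(2) t'(2) by (intro BsetI) auto
  moreover have "(real (n' * j + n * j') - real (n' * m + n * m')) / real (n * n') = s + t"
    unfolding s'(1) t'(1) using s'(2) t'(2) by (simp add: field_simps)
  ultimately have "s + t \<in> Bset (x \<otimes> y)" by simp
  then show "Inf (Bset (x \<otimes> y)) \<le> s + t"
    using Bset_nonneg xc yc by (intro inf_lower0) (auto simp: I_carrier)
qed


lemma q0_one: "q0 \<one> = 0"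
proof -
  have "mle G (\<one> [^] (1::nat) \<otimes> a [^] (0::nat)) (b [^] (0::nat))" using mle_refl[of \<one>] by simp
  then have "(real (0::nat) - real (0::nat)) / real (1::nat) \<in> Bset \<one>" by (intro BsetI) auto
  then have "q0 \<one> \<le> 0" using q0_le[OF I_one] by simp
  then show ?thesis using q0_nonneg[OF I_one] by simp
qed

lemma q0_pow: assumes x: "x \<in> I" shows "q0 (x [^] (n::nat)) = real n * q0 x"
proof (cases "n = 0")
  case True then show ?thesis by (simp add: q0_one)
next
  case False
  then have n: "real n > 0" by simp
  have xc: "x \<in> carrier G" using x I_carrier by auto
  have xn: "x [^] n \<in> I" using x I_pow by auto
  have "q0 (x [^] n) / real n \<le> q0 x"
  proof (rule q0_ge[OF x])
    fix t assume "t \<in> Bset x"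
    then obtain n' m j where t: "t = (real j - real m) / real n'" "n' \<ge> 1" "mle G (x [^] n' \<otimes> a [^] m) (b [^] j)"
      unfolding Bset_def by blast
    have "mle G ((x [^] n' \<otimes> a [^] m) [^] n) ((b [^] j) [^] n)" using t(3) xc a by (intro mle_pow) auto
    then have "mle G ((x [^] n) [^] n' \<otimes> a [^] (n * m)) (b [^] (j * n))"
      using id2[OF xc a, of n n' m] b by (simp add: nat_pow_pow)
    then have "(real (j * n) - real (n * m)) / real n' \<in> Bset (x [^] n)" using t(2) by (intro BsetI)
    then have "q0 (x [^] n) \<le> (real (j * n) - real (n * m)) / real n'" using q0_le[OF xn] by blast
    also have "\<dots> = real n * t" unfolding t(1) by (simp add: field_simps)
    finally show "q0 (x [^] n) / real n \<le> t" using n by (simp add: field_simps)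
  qed
  moreover have "real n * q0 x \<le> q0 (x [^] n)"
  proof (rule q0_ge[OF xn])
    fix t assume "t \<in> Bset (x [^] n)"
    then obtain n' m j where t: "t = (real j - real m) / real n'" "n' \<ge> 1" "mle G ((x [^] n) [^] n' \<otimes> a [^] m) (b [^] j)"
      unfolding Bset_def by blast
    have "mle G (x [^] (n * n') \<otimes> a [^] m) (b [^] j)" using t(3) xc by (simp add: nat_pow_pow)
    then have "(real j - real m) / real (n * n') \<in> Bset x" using t(2) False by (intro BsetI) auto
    then have "q0 x \<le> (real j - real m) / real (n * n')" using q0_le[OF x] by blast
    then have "real n * q0 x \<le> real n * ((real j - real m) / real (n * n'))" by (rule mult_left_mono) (use n in simp_all)
    also have "\<dots> = t" unfolding t(1) using n t(2) by (simp add: field_simps)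
    finally show "real n * q0 x \<le> t" .
  qed
  ultimately show ?thesis using n by (simp add: field_simps)
qed

lemma q0_mono: assumes x: "x \<in> I" and y: "y \<in> I" and le: "mle G x y" shows "q0 x \<le> q0 y"
proof (rule q0_ge[OF y])
  fix t assume "t \<in> Bset y"
  then obtain n m j where t: "t = (real j - real m) / real n" "n \<ge> 1" "mle G (y [^] n \<otimes> a [^] m) (b [^] j)"
    unfolding Bset_def by blast
  have xc: "x \<in> carrier G" using x I_carrier by auto
  have "mle G (x [^] n \<otimes> a [^] m) (y [^] n \<otimes> a [^] m)" using le xc a by (intro mle_mono mle_pow mle_refl) auto
  then have "mle G (x [^] n \<otimes> a [^] m) (b [^] j)" using t(3) xc a by (blast intro: mle_trans)
  then have "t \<in> Bset x" using t(1,2) by (simp add: BsetI)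
  then show "q0 x \<le> t" using q0_le[OF x] by blast
qed

lemma q0_a: assumes x: "x \<in> I" shows "q0 x + real m' \<le> q0 (x \<otimes> a [^] (m'::nat))"
proof (rule q0_ge)
  show "x \<otimes> a [^] m' \<in> I" using x a_I by (simp add: I_mult I_pow)
  fix t assume "t \<in> Bset (x \<otimes> a [^] m')"
  then obtain n m j where t: "t = (real j - real m) / real n" "n \<ge> 1" "mle G ((x \<otimes> a [^] m') [^] n \<otimes> a [^] m) (b [^] j)"
    unfolding Bset_def by blast
  have xc: "x \<in> carrier G" using x I_carrier by auto
  have "(x \<otimes> a [^] m') [^] n \<otimes> a [^] m = x [^] n \<otimes> a [^] (m' * n + m)"
    using xc a by (simp add: nat_pow_distrib nat_pow_pow m_assoc nat_pow_mult)
  then have "(real j - real (m' * n + m)) / real n \<in> Bset x" using t by (intro BsetI) auto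
  then have "q0 x \<le> (real j - real (m' * n + m)) / real n" using q0_le[OF x] by blast
  also have "\<dots> = t - real m'" unfolding t(1) using t(2) by (simp add: field_simps)
  finally show "q0 x + real m' \<le> t" by simp
qed

lemma q0_b: "q0 b \<le> 1"
proof -
  have "mle G (b [^] (1::nat) \<otimes> a [^] (0::nat)) (b [^] (1::nat))" using mle_refl[OF b] b by simp
  then have "(real (1::nat) - real (0::nat)) / real (1::nat) \<in> Bset b" by (intro BsetI) auto
  then show ?thesis using q0_le[OF b_I] by simp
qed

definition inS :: "('a \<Rightarrow> real) \<Rightarrow> bool" where
  "inS q \<longleftrightarrow> (\<forall>x. x \<notin> I \<longrightarrow> q x = 0) \<and> (\<forall>x\<in>I. 0 \<le> q x) \<and>
     (\<forall>x\<in>I. \<forall>y\<in>I. q (x \<otimes> y) \<le> q x + q y) \<and> (\<forall>x\<in>I. \<forall>n::nat. q (x [^] n) = real n * q x) \<and>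
     (\<forall>x\<in>I. \<forall>y\<in>I. mle G x y \<longrightarrow> q x \<le> q y) \<and> (\<forall>x\<in>I. \<forall>m::nat. q x + real m \<le> q (x \<otimes> a [^] m)) \<and> q b \<le> 1"

lemma q0_S: "inS q0"
  unfolding inS_def using q0_nonneg q0_subadd q0_pow q0_mono q0_a q0_b by (auto simp: q0_def)


lemma inS_out: "inS q \<Longrightarrow> x \<notin> I \<Longrightarrow> q x = 0" by (simp add: inS_def)
lemma inS_nonneg: "inS q \<Longrightarrow> x \<in> I \<Longrightarrow> 0 \<le> q x" by (simp add: inS_def)
lemma inS_sub: "inS q \<Longrightarrow> x \<in> I \<Longrightarrow> y \<in> I \<Longrightarrow> q (x \<otimes> y) \<le> q x + q y" by (simp add: inS_def)
lemma inS_pow: "inS q \<Longrightarrow> x \<in> I \<Longrightarrow> q (x [^] (n::nat)) = real n * q x" by (simp add: inS_def)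
lemma inS_mono: "inS q \<Longrightarrow> x \<in> I \<Longrightarrow> y \<in> I \<Longrightarrow> mle G x y \<Longrightarrow> q x \<le> q y" by (simp add: inS_def)
lemma inS_a: "inS q \<Longrightarrow> x \<in> I \<Longrightarrow> q x + real m \<le> q (x \<otimes> a [^] (m::nat))" by (simp add: inS_def)
lemma inS_b: "inS q \<Longrightarrow> q b \<le> 1" by (simp add: inS_def)

definition Aset where
  "Aset f z x = {(f (x [^] k \<otimes> z [^] n) - real n * f z) / real k | k n. (k::nat) \<ge> 1}"

definition qq where "qq f z x = (if x \<in> I then Inf (Aset f z x) else 0)"

context
  fixes f z assumes f: "inS f" and z: "z \<in> I"
begin

lemma zc: "z \<in> carrier G" using z I_carrier by auto

lemma AsetI: "k \<ge> 1 \<Longrightarrow> (f (x [^] k \<otimes> z [^] n) - real n * f z) / real k \<in> Aset f z x"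
  unfolding Aset_def by blast

lemma AsetE: "t \<in> Aset f z x \<Longrightarrow> (\<And>k n. k \<ge> 1 \<Longrightarrow> t = (f (x [^] k \<otimes> z [^] (n::nat)) - real n * f z) / real (k::nat) \<Longrightarrow> P) \<Longrightarrow> P"
  unfolding Aset_def by blast

lemma A_nonneg: assumes x: "x \<in> I" and t: "t \<in> Aset f z x" shows "0 \<le> t"
  using t
proof (rule AsetE)
  fix k n assume k: "k \<ge> (1::nat)" and t: "t = (f (x [^] k \<otimes> z [^] (n::nat)) - real n * f z) / real k"
  have xc: "x \<in> carrier G" using x I_carrier by auto
  have "f (z [^] n) \<le> f (x [^] k \<otimes> z [^] n)"
    using f x z xc zc by (intro inS_mono mle_multI2) (auto simp: I_mult I_pow)
  then have "real n * f z \<le> f (x [^] k \<otimes> z [^] n)" using inS_pow[OF f z] by simp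
  then show "0 \<le> t" unfolding t using k by simp
qed

lemma A_f: assumes x: "x \<in> I" shows "f x \<in> Aset f z x"
proof -
  have xc: "x \<in> carrier G" using x I_carrier by auto
  have "(f (x [^] (1::nat) \<otimes> z [^] (0::nat)) - real (0::nat) * f z) / real (1::nat) \<in> Aset f z x"
    unfolding Aset_def by blast
  then show ?thesis using xc by simp
qed

lemma qq_le: "x \<in> I \<Longrightarrow> t \<in> Aset f z x \<Longrightarrow> qq f z x \<le> t"
proof -
  assume x: "x \<in> I" and t: "t \<in> Aset f z x"
  have "Inf (Aset f z x) \<le> t" using t A_nonneg[OF x] by (intro inf_lower0) auto
  then show ?thesis using x by (simp add: qq_def)
qed

lemma qq_ge: "x \<in> I \<Longrightarrow> (\<And>t. t \<in> Aset f z x \<Longrightarrow> c \<le> t) \<Longrightarrow> c \<le> qq f z x"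
  unfolding qq_def using A_f by (auto intro!: inf_ge)

lemma qq_nonneg: "x \<in> I \<Longrightarrow> 0 \<le> qq f z x"
  using qq_ge A_nonneg by blast

lemma qq_le_f: "qq f z x \<le> f x"
  using qq_le A_f inS_out[OF f] by (cases "x \<in> I") (auto simp: qq_def)

lemma qq_sub: assumes x: "x \<in> I" and y: "y \<in> I" shows "qq f z (x \<otimes> y) \<le> qq f z x + qq f z y"
  unfolding qq_def using x y
proof (simp add: I_mult, intro inf_add_le)
  show "Aset f z x \<noteq> {}" "Aset f z y \<noteq> {}" using x y A_f by blast+
  show "\<And>t. t \<in> Aset f z x \<Longrightarrow> 0 \<le> t" "\<And>t. t \<in> Aset f z y \<Longrightarrow> 0 \<le> t"
    using x y A_nonneg by blast+
  have xc: "x \<in> carrier G" and yc: "y \<in> carrier G" using x y I_carrier by auto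
  fix s t assume s: "s \<in> Aset f z x" and t: "t \<in> Aset f z y"
  obtain k n where s': "k \<ge> 1" "s = (f (x [^] k \<otimes> z [^] (n::nat)) - real n * f z) / real (k::nat)"
    using s by (rule AsetE)
  obtain k' n' where t': "k' \<ge> 1" "t = (f (y [^] k' \<otimes> z [^] (n'::nat)) - real n' * f z) / real (k'::nat)"
    using t by (rule AsetE)
  define X where "X = x [^] k \<otimes> z [^] n"
  define Y where "Y = y [^] k' \<otimes> z [^] n'"
  have XI: "X \<in> I" and YI: "Y \<in> I" using x y z by (simp_all add: X_def Y_def I_mult I_pow)
  have eq: "(x \<otimes> y) [^] (k * k') \<otimes> z [^] (k' * n + k * n') = X [^] k' \<otimes> Y [^] k"
    unfolding X_def Y_def by (rule id1[OF xc yc zc])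
  have "f (X [^] k' \<otimes> Y [^] k) \<le> f (X [^] k') + f (Y [^] k)"
    using XI YI f by (intro inS_sub) (auto simp: I_pow)
  also have "\<dots> = real k' * f X + real k * f Y" using f XI YI by (simp add: inS_pow)
  finally have le1: "f (X [^] k' \<otimes> Y [^] k) \<le> real k' * f X + real k * f Y" .
  have mem: "(f ((x \<otimes> y) [^] (k * k') \<otimes> z [^] (k' * n + k * n')) - real (k' * n + k * n') * f z) / real (k * k')
     \<in> Aset f z (x \<otimes> y)" using s'(1) t'(1) unfolding Aset_def
    by (intro CollectI exI[of _ "k * k'"] exI[of _ "k' * n + k * n'"] conjI refl) simp
  have "(f ((x \<otimes> y) [^] (k * k') \<otimes> z [^] (k' * n + k * n')) - real (k' * n + k * n') * f z) / real (k * k')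
     \<le> (real k' * f X + real k * f Y - real (k' * n + k * n') * f z) / real (k * k')"
    unfolding eq using le1 s'(1) t'(1) by (intro divide_right_mono) auto
  also have "\<dots> = s + t" unfolding s'(2) t'(2) X_def[symmetric] Y_def[symmetric] using s'(1) t'(1)
    by (simp add: field_simps)
  finally have "Inf (Aset f z (x \<otimes> y)) \<le> s + t"
    using mem A_nonneg[OF I_mult[OF x y]] by (meson inf_lower0 order_trans)
  then show "Inf (Aset f z (x \<otimes> y)) \<le> s + t" .
qed


lemma f_one: "f \<one> = 0"
  using inS_pow[OF f b_I, of 0] by simp

lemma qq_one: "qq f z \<one> = 0"
  using qq_le_f[of \<one>] qq_nonneg[OF I_one] f_one by simp

lemma qq_pow: assumes x: "x \<in> I" shows "qq f z (x [^] (N::nat)) = real N * qq f z x"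
proof (cases "N = 0")
  case True then show ?thesis by (simp add: qq_one)
next
  case False
  then have N: "real N > 0" by simp
  have xc: "x \<in> carrier G" using x I_carrier by auto
  have xN: "x [^] N \<in> I" using x I_pow by auto
  have "qq f z (x [^] N) / real N \<le> qq f z x"
  proof (rule qq_ge[OF x])
    fix t assume "t \<in> Aset f z x"
    then obtain k n where t: "k \<ge> 1" "t = (f (x [^] k \<otimes> z [^] (n::nat)) - real n * f z) / real (k::nat)"
      by (rule AsetE)
    define X where "X = x [^] k \<otimes> z [^] n"
    have XI: "X \<in> I" using x z by (simp add: X_def I_mult I_pow)
    have eq: "(x [^] N) [^] k \<otimes> z [^] (N * n) = X [^] N" unfolding X_def by (rule id2[OF xc zc])
    have "(f ((x [^] N) [^] k \<otimes> z [^] (N * n)) - real (N * n) * f z) / real k \<in> Aset f z (x [^] N)"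
      using t(1) unfolding Aset_def by blast
    then have "qq f z (x [^] N) \<le> (f ((x [^] N) [^] k \<otimes> z [^] (N * n)) - real (N * n) * f z) / real k"
      using qq_le[OF xN] by blast
    also have "\<dots> = real N * t" unfolding eq t(2) inS_pow[OF f XI] X_def[symmetric] using t(1)
      by (simp add: field_simps)
    finally show "qq f z (x [^] N) / real N \<le> t" using N by (simp add: field_simps)
  qed
  moreover have "real N * qq f z x \<le> qq f z (x [^] N)"
  proof (rule qq_ge[OF xN])
    fix t assume "t \<in> Aset f z (x [^] N)"
    then obtain k n where t: "k \<ge> 1" "t = (f ((x [^] N) [^] k \<otimes> z [^] (n::nat)) - real n * f z) / real (k::nat)"
      by (rule AsetE)
    have "(f (x [^] (N * k) \<otimes> z [^] n) - real n * f z) / real (N * k) \<in> Aset f z x"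
      using t(1) False unfolding Aset_def by (intro CollectI exI[of _ "N * k"] exI[of _ n] conjI refl) auto
    then have "qq f z x \<le> (f (x [^] (N * k) \<otimes> z [^] n) - real n * f z) / real (N * k)"
      using qq_le[OF x] by blast
    then have "real N * qq f z x \<le> real N * ((f (x [^] (N * k) \<otimes> z [^] n) - real n * f z) / real (N * k))"
      by (rule mult_left_mono) (use N in simp_all)
    also have "\<dots> = t" unfolding t(2) using N t(1) xc by (simp add: field_simps nat_pow_pow)
    finally show "real N * qq f z x \<le> t" .
  qed
  ultimately show ?thesis using N by (simp add: field_simps)
qed

lemma qq_mono: assumes x: "x \<in> I" and y: "y \<in> I" and le: "mle G x y" shows "qq f z x \<le> qq f z y"
proof (rule qq_ge[OF y])
  fix t assume "t \<in> Aset f z y"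
  then obtain k n where t: "k \<ge> 1" "t = (f (y [^] k \<otimes> z [^] (n::nat)) - real n * f z) / real (k::nat)"
    by (rule AsetE)
  have xc: "x \<in> carrier G" using x I_carrier by auto
  have "f (x [^] k \<otimes> z [^] n) \<le> f (y [^] k \<otimes> z [^] n)"
    using f x y z le xc zc by (intro inS_mono mle_mono mle_pow mle_refl) (auto simp: I_mult I_pow)
  then have "(f (x [^] k \<otimes> z [^] n) - real n * f z) / real k \<le> t"
    unfolding t(2) using t(1) by (intro divide_right_mono) auto
  moreover have "(f (x [^] k \<otimes> z [^] n) - real n * f z) / real k \<in> Aset f z x" using t(1) unfolding Aset_def by blast
  ultimately show "qq f z x \<le> t" using qq_le[OF x] by force
qed

lemma qq_a: assumes x: "x \<in> I" shows "qq f z x + real m' \<le> qq f z (x \<otimes> a [^] (m'::nat))"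
proof (rule qq_ge)
  show xa: "x \<otimes> a [^] m' \<in> I" using x a_I by (simp add: I_mult I_pow)
  fix t assume "t \<in> Aset f z (x \<otimes> a [^] m')"
  then obtain k n where t: "k \<ge> 1" "t = (f ((x \<otimes> a [^] m') [^] k \<otimes> z [^] (n::nat)) - real n * f z) / real (k::nat)"
    by (rule AsetE)
  have xc: "x \<in> carrier G" using x I_carrier by auto
  define X where "X = x [^] k \<otimes> z [^] n"
  have XI: "X \<in> I" using x z by (simp add: X_def I_mult I_pow)
  have eq: "(x \<otimes> a [^] m') [^] k \<otimes> z [^] n = X \<otimes> a [^] (m' * k)" unfolding X_def by (rule id3[OF xc zc a])
  have "f X + real (m' * k) \<le> f (X \<otimes> a [^] (m' * k))" using inS_a[OF f XI] .
  have e2: "(f X - real n * f z) / real k + real m' = (f X + real (m' * k) - real n * f z) / real k"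
    using t(1) by (simp add: field_simps)
  have "(f X + real (m' * k) - real n * f z) / real k \<le> (f (X \<otimes> a [^] (m' * k)) - real n * f z) / real k"
    using \<open>f X + real (m' * k) \<le> f (X \<otimes> a [^] (m' * k))\<close> t(1) by (intro divide_right_mono) auto
  then have "(f X - real n * f z) / real k + real m' \<le> t"
    unfolding t(2) eq e2 .
  moreover have "(f X - real n * f z) / real k \<in> Aset f z x" unfolding X_def using t(1) unfolding Aset_def by blast
  ultimately show "qq f z x + real m' \<le> t" using qq_le[OF x] by force
qed

lemma qq_S: "inS (qq f z)"
  unfolding inS_def using qq_nonneg qq_sub qq_pow qq_mono qq_a qq_le_f[of b] inS_b[OF f]
  by (auto simp: qq_def)

end


definition Srel where "Srel = relation_of (\<lambda>q q'. \<forall>x. q' x \<le> q x) {q. inS q}"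

lemma Srel_po: "Partial_order Srel"
  unfolding Srel_def
  apply (rule Partial_order_relation_ofI, rule partial_order_on_relation_ofI)
    apply simp
   apply (blast intro: order_trans)
  apply (rule ext, meson order_antisym)
  done

lemma Srel_Field: "Field Srel = {q. inS q}"
  unfolding Srel_def by (rule Field_relation_of) (auto simp: relation_of_def refl_on_def)

lemma Srel_iff: "(q, q') \<in> Srel \<longleftrightarrow> inS q \<and> inS q' \<and> (\<forall>x. q' x \<le> q x)"
  by (simp add: Srel_def relation_of_def)

lemma chain_bound:
  assumes C: "C \<in> Chains Srel"
  shows "\<exists>u\<in>Field Srel. \<forall>q\<in>C. (q, u) \<in> Srel"
proof (cases "C = {}")
  case True then show ?thesis using q0_S Srel_Field by auto
next
  case False
  have CS: "\<And>q. q \<in> C \<Longrightarrow> inS q" using C by (auto simp: Chains_def Srel_iff)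
  have cmp: "\<And>q q'. q \<in> C \<Longrightarrow> q' \<in> C \<Longrightarrow> (\<forall>x. q' x \<le> q x) \<or> (\<forall>x. q x \<le> q' x)"
    using C by (auto simp: Chains_def Srel_iff)
  define u where "u x = (if x \<in> I then Inf ((\<lambda>q. q x) ` C) else 0)" for x
  have ule: "\<And>x q. x \<in> I \<Longrightarrow> q \<in> C \<Longrightarrow> u x \<le> q x"
    unfolding u_def using CS inS_nonneg by (auto intro!: inf_lower0)
  have uge: "\<And>x c. x \<in> I \<Longrightarrow> (\<And>q. q \<in> C \<Longrightarrow> c \<le> q x) \<Longrightarrow> c \<le> u x"
    unfolding u_def using False by (auto intro!: inf_ge)
  have u_out: "\<And>x. x \<notin> I \<Longrightarrow> u x = 0" by (simp add: u_def)
  obtain q1 where q1: "q1 \<in> C" using False by blast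
  have u_nonneg: "\<And>x. x \<in> I \<Longrightarrow> 0 \<le> u x" using uge CS inS_nonneg by blast
  have u_sub: "u (x \<otimes> y) \<le> u x + u y" if x: "x \<in> I" and y: "y \<in> I" for x y
  proof -
    have xy: "x \<otimes> y \<in> I" using x y I_mult by blast
    have "u (x \<otimes> y) \<le> Inf ((\<lambda>q. q x) ` C) + Inf ((\<lambda>q. q y) ` C)"
    proof (rule inf_add_le)
      show "(\<lambda>q. q x) ` C \<noteq> {}" "(\<lambda>q. q y) ` C \<noteq> {}" using False by auto
      show "\<And>t. t \<in> (\<lambda>q. q x) ` C \<Longrightarrow> 0 \<le> t" "\<And>t. t \<in> (\<lambda>q. q y) ` C \<Longrightarrow> 0 \<le> t"
        using CS inS_nonneg x y by auto
      fix s t assume "s \<in> (\<lambda>q. q x) ` C" "t \<in> (\<lambda>q. q y) ` C"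
      then obtain p p' where p: "p \<in> C" "s = p x" and p': "p' \<in> C" "t = p' y" by auto
      show "u (x \<otimes> y) \<le> s + t"
      proof (cases "\<forall>w. p' w \<le> p w")
        case True
        have "u (x \<otimes> y) \<le> p' (x \<otimes> y)" using ule[OF xy p'(1)] .
        also have "\<dots> \<le> p' x + p' y" using inS_sub[OF CS[OF p'(1)] x y] .
        also have "\<dots> \<le> s + t" using True p p' by (simp add: add_right_mono)
        finally show ?thesis .
      next
        case False
        then have le: "\<forall>w. p w \<le> p' w" using cmp[OF p(1) p'(1)] by blast
        have "u (x \<otimes> y) \<le> p (x \<otimes> y)" using ule[OF xy p(1)] .
        also have "\<dots> \<le> p x + p y" using inS_sub[OF CS[OF p(1)] x y] .
        also have "\<dots> \<le> s + t" using le p p' by (simp add: add_left_mono)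
        finally show ?thesis .
      qed
    qed
    then show ?thesis using x y by (simp add: u_def)
  qed
  have u_pow: "u (x [^] n) = real n * u x" if x: "x \<in> I" for x and n :: nat
  proof -
    have xn: "x [^] n \<in> I" using x I_pow by blast
    have ge: "real n * u x \<le> u (x [^] n)"
    proof (rule uge[OF xn])
      fix q assume q: "q \<in> C"
      have "real n * u x \<le> real n * q x" using ule[OF x q] by (simp add: mult_left_mono)
      then show "real n * u x \<le> q (x [^] n)" using inS_pow[OF CS[OF q] x] by simp
    qed
    have le: "u (x [^] n) \<le> real n * u x"
    proof (cases "n = 0")
      case True
      have "u (x [^] n) \<le> q1 (x [^] n)" using ule[OF xn q1] .
      then show ?thesis using True inS_pow[OF CS[OF q1] x, of 0] by simp
    next
      case False
      have "u (x [^] n) / real n \<le> u x"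
      proof (rule uge[OF x])
        fix q assume q: "q \<in> C"
        have "u (x [^] n) \<le> real n * q x" using ule[OF xn q] inS_pow[OF CS[OF q] x] by simp
        then show "u (x [^] n) / real n \<le> q x" using False by (simp add: field_simps)
      qed
      then show ?thesis using False by (simp add: field_simps)
    qed
    show ?thesis using le ge by simp
  qed
  have u_mono: "u x \<le> u y" if "x \<in> I" "y \<in> I" "mle G x y" for x y
    using that by (intro uge) (auto intro: order_trans[OF ule] inS_mono CS)
  have u_a: "u x + real m \<le> u (x \<otimes> a [^] m)" if x: "x \<in> I" for x and m :: nat
  proof (rule uge)
    show "x \<otimes> a [^] m \<in> I" using x a_I by (simp add: I_mult I_pow)
    fix q assume q: "q \<in> C"
    show "u x + real m \<le> q (x \<otimes> a [^] m)" using ule[OF x q] inS_a[OF CS[OF q] x, of m] by simp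
  qed
  have u_b: "u b \<le> 1" using ule[OF b_I q1] inS_b[OF CS[OF q1]] by simp
  have uS: "inS u"
    unfolding inS_def using u_out u_nonneg u_sub u_pow u_mono u_a u_b by blast
  have "\<forall>q\<in>C. (q, u) \<in> Srel"
  proof
    fix q assume q: "q \<in> C"
    have "\<forall>x. u x \<le> q x"
    proof
      fix x show "u x \<le> q x" using ule[OF _ q] u_out inS_out[OF CS[OF q]] by (cases "x \<in> I") auto
    qed
    then show "(q, u) \<in> Srel" using CS[OF q] uS by (simp add: Srel_iff)
  qed
  then show ?thesis using uS Srel_Field by auto
qed

lemma exists_additive:
  "\<exists>f. inS f \<and> (\<forall>x\<in>I. \<forall>y\<in>I. f (x \<otimes> y) = f x + f y)"
proof -
  obtain m where m: "m \<in> Field Srel" and mmin: "\<forall>q\<in>Field Srel. (m, q) \<in> Srel \<longrightarrow> q = m"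
    using Zorns_po_lemma[OF Srel_po chain_bound] by blast
  have mS: "inS m" using m Srel_Field by simp
  have "m (x \<otimes> y) = m x + m y" if x: "x \<in> I" and y: "y \<in> I" for x y
  proof -
    have "inS (qq m y)" using qq_S[OF mS y] .
    moreover have "\<forall>w. qq m y w \<le> m w" using qq_le_f[OF mS y] by blast
    ultimately have "qq m y = m" using mmin mS Srel_Field by (simp add: Srel_iff)
    moreover have "qq m y x \<le> (m (x [^] (1::nat) \<otimes> y [^] (1::nat)) - real (1::nat) * m y) / real (1::nat)"
    proof (rule qq_le[OF mS y x])
      show "(m (x [^] (1::nat) \<otimes> y [^] (1::nat)) - real (1::nat) * m y) / real (1::nat) \<in> Aset m y x"
        unfolding Aset_def by blast
    qed
    ultimately have "m x \<le> m (x \<otimes> y) - m y" using x y I_carrier by simp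
    then show ?thesis using inS_sub[OF mS x y] by simp
  qed
  then show ?thesis using mS by blast
qed


lemma GH_state:
  "\<exists>\<mu>::'a \<Rightarrow> ennreal. \<mu> \<one> = 0 \<and> (\<forall>x\<in>carrier G. \<forall>y\<in>carrier G. \<mu> (x \<otimes> y) = \<mu> x + \<mu> y) \<and> \<mu> b = 1 \<and> \<not> \<mu> a < 1"
proof -
  obtain f where fS: "inS f" and fadd: "\<And>x y. x \<in> I \<Longrightarrow> y \<in> I \<Longrightarrow> f (x \<otimes> y) = f x + f y"
    using exists_additive by blast
  have f1: "f \<one> = 0" using inS_pow[OF fS b_I, of 0] by simp
  have fa: "1 \<le> f a" using inS_a[OF fS I_one, of 1] f1 a by simp
  have fb1: "f b \<le> 1" using inS_b[OF fS] .
  have "f a \<le> f (b [^] k)" using inS_mono[OF fS a_I I_pow[OF b_I] ak] .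
  then have "1 \<le> real k * f b" using fa inS_pow[OF fS b_I, of k] by simp
  moreover have "0 \<le> f b" using inS_nonneg[OF fS b_I] .
  ultimately have fbpos: "0 < f b" by (cases "f b = 0") auto
  define \<mu> where "\<mu> x = (if x \<in> I then ennreal (f x / f b) else (Orderings.top :: ennreal))" for x
  have "\<mu> \<one> = 0" using I_one f1 by (simp add: \<mu>_def)
  moreover have "\<mu> (x \<otimes> y) = \<mu> x + \<mu> y" if x: "x \<in> carrier G" and y: "y \<in> carrier G" for x y
  proof (cases "x \<in> I \<and> y \<in> I")
    case True
    then have "f (x \<otimes> y) / f b = f x / f b + f y / f b" using fadd by (simp add: add_divide_distrib)
    moreover have "0 \<le> f x / f b" "0 \<le> f y / f b" using True inS_nonneg[OF fS] fbpos by auto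
    ultimately show ?thesis using True I_mult by (simp add: \<mu>_def ennreal_plus)
  next
    case False
    then have "x \<otimes> y \<notin> I" using I_left[OF x y] I_right[OF x y] by blast
    then show ?thesis using False by (auto simp: \<mu>_def)
  qed
  moreover have "\<mu> b = 1" using b_I fbpos by (simp add: \<mu>_def)
  moreover have "\<not> \<mu> a < 1"
  proof -
    have "1 \<le> f a / f b" using fa fb1 fbpos by (simp add: field_simps)
    then have "ennreal 1 \<le> ennreal (f a / f b)" by (rule ennreal_leI)
    then show ?thesis using a_I by (simp add: \<mu>_def not_less)
  qed
  ultimately show ?thesis by blast
qed

end

definition mstate :: "('a, 'm) monoid_scheme \<Rightarrow> ('a \<Rightarrow> ennreal) \<Rightarrow> bool" where
  "mstate M \<mu> \<longleftrightarrow> \<mu> \<one>\<^bsub>M\<^esub> = 0 \<and> (\<forall>x\<in>carrier M. \<forall>y\<in>carrier M. \<mu> (x \<otimes>\<^bsub>M\<^esub> y) = \<mu> x + \<mu> y)"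

context comm_monoid
begin

lemma state_mono: "mstate G \<mu> \<Longrightarrow> mle G x y \<Longrightarrow> x \<in> carrier G \<Longrightarrow> \<mu> x \<le> \<mu> y"
  unfolding mle_def mstate_def by auto

lemma state_pow: "mstate G \<mu> \<Longrightarrow> x \<in> carrier G \<Longrightarrow> \<mu> (x [^] (n::nat)) = of_nat n * \<mu> x"
proof (induction n)
  case 0 then show ?case by (simp add: mstate_def)
next
  case (Suc n)
  then have "\<mu> (x [^] Suc n) = of_nat n * \<mu> x + \<mu> x" by (simp add: mstate_def)
  then show ?case by (simp add: algebra_simps)
qed

theorem abstract_main:
  "(\<forall>a\<in>carrier G. \<forall>b\<in>carrier G. \<forall>n::nat. mle G (a [^] Suc n) (b [^] n) \<longrightarrow> mle G a b) \<longleftrightarrow>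
   (\<forall>a\<in>carrier G. \<forall>b\<in>carrier G.
      ((\<exists>k::nat. mle G a (b [^] k)) \<and> (\<forall>\<mu>. mstate G \<mu> \<and> \<mu> b = 1 \<longrightarrow> \<mu> a < 1)) \<longrightarrow> mle G a b)"
proof (intro iffI ballI impI allI)
  fix a b assume AU: "\<forall>a\<in>carrier G. \<forall>b\<in>carrier G. \<forall>n::nat. mle G (a [^] Suc n) (b [^] n) \<longrightarrow> mle G a b"
    and a: "a \<in> carrier G" and b: "b \<in> carrier G"
    and H: "(\<exists>k::nat. mle G a (b [^] k)) \<and> (\<forall>\<mu>. mstate G \<mu> \<and> \<mu> b = 1 \<longrightarrow> \<mu> a < 1)"
  show "mle G a b"
  proof (rule ccontr)
    assume nab: "\<not> mle G a b"
    obtain k :: nat where ak: "mle G a (b [^] k)" using conjunct1[OF H] by (elim exE)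
    have AU': "\<And>n. mle G (a [^] Suc n) (b [^] n) \<Longrightarrow> mle G a b" using AU a b by blast
    interpret GH G a b k
      by unfold_locales (fact a b ak nab AU')+
    obtain \<mu> :: "'a \<Rightarrow> ennreal" where \<mu>: "\<mu> \<one> = 0" "\<forall>x\<in>carrier G. \<forall>y\<in>carrier G. \<mu> (x \<otimes> y) = \<mu> x + \<mu> y"
      "\<mu> b = 1" "\<not> \<mu> a < 1" using GH_state by blast
    have "mstate G \<mu>" using \<mu> by (simp add: mstate_def)
    moreover have "\<forall>\<mu>. mstate G \<mu> \<and> \<mu> b = 1 \<longrightarrow> \<mu> a < 1" using H by (rule conjunct2)
    ultimately have "\<mu> a < 1" using \<mu>(3) by simp
    then show False using \<mu>(4) by simp
  qed
next
  fix a b n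
  assume C: "\<forall>a\<in>carrier G. \<forall>b\<in>carrier G.
      ((\<exists>k::nat. mle G a (b [^] k)) \<and> (\<forall>\<mu>. mstate G \<mu> \<and> \<mu> b = 1 \<longrightarrow> \<mu> a < 1)) \<longrightarrow> mle G a b"
    and a: "a \<in> carrier G" and b: "b \<in> carrier G" and le: "mle G (a [^] Suc n) (b [^] n)"
  have "mle G a (a [^] Suc n)" using a by (simp add: mle_multI2)
  then have k: "mle G a (b [^] n)" using le a by (blast intro: mle_trans)
  have st: "\<mu> a < 1" if \<mu>: "mstate G \<mu>" "\<mu> b = 1" for \<mu>
  proof (rule ccontr)
    assume "\<not> \<mu> a < 1"
    then have "1 \<le> \<mu> a" by (simp add: not_less)
    have "\<mu> (a [^] Suc n) \<le> \<mu> (b [^] n)" using state_mono[OF \<mu>(1) le] a by simp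
    moreover have "\<mu> (a [^] Suc n) = of_nat (Suc n) * \<mu> a" by (rule state_pow[OF \<mu>(1) a])
    moreover have "\<mu> (b [^] n) = of_nat n" using state_pow[OF \<mu>(1) b, of n] \<mu>(2) by simp
    ultimately have A: "of_nat (Suc n) * \<mu> a \<le> of_nat n" by simp
    have B: "of_nat (Suc n) * 1 \<le> of_nat (Suc n) * \<mu> a" using \<open>1 \<le> \<mu> a\<close> by (rule mult_left_mono) simp
    have "(of_nat (Suc n) :: ennreal) * 1 \<le> of_nat n" using order_trans[OF B A] .
    then have "(of_nat (Suc n) :: ennreal) \<le> of_nat n" by (simp only: mult_1_right)
    then show False by (simp only: of_nat_le_iff)
  qed
  have hyp: "(\<exists>k::nat. mle G a (b [^] k)) \<and> (\<forall>\<mu>. mstate G \<mu> \<and> \<mu> b = 1 \<longrightarrow> \<mu> a < 1)"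
    using k st by blast
  show "mle G a b" using bspec[OF bspec[OF C a] b] hyp by (rule mp)
qed

end


lemma tmult_pow: "tmult G \<alpha> n x = x [^]\<^bsub>\<lparr>carrier = Tsg G \<alpha>, mult = tadd G \<alpha>, one = tzero G \<alpha>\<rparr>\<^esub> n"
  by (induction n) simp_all

lemma tle_mle: "tle G \<alpha> x y = mle \<lparr>carrier = Tsg G \<alpha>, mult = tadd G \<alpha>, one = tzero G \<alpha>\<rparr> x y"
  by (simp add: tle_def mle_def)

lemma state_eq: "is_state G \<alpha> \<mu> = mstate \<lparr>carrier = Tsg G \<alpha>, mult = tadd G \<alpha>, one = tzero G \<alpha>\<rparr> \<mu>"
  by (simp add: is_state_def mstate_def)

theorem lemmal:
  fixes G :: "('g, 'b) monoid_scheme" and \<alpha> :: "'g \<Rightarrow> 'x::t2_space \<Rightarrow> 'x"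
  assumes "continuous_action G \<alpha>"
    and "countable (carrier G)"
    and "compact (UNIV :: 'x set)"
    and "zero_dimensional TYPE('x)"
  shows "almost_unperforated G \<alpha> \<longleftrightarrow>
    (\<forall>a\<in>Tsg G \<alpha>. \<forall>b\<in>Tsg G \<alpha>.
       ((\<exists>k::nat. tle G \<alpha> a (tmult G \<alpha> k b)) \<and>
        (\<forall>\<mu>. is_state G \<alpha> \<mu> \<and> \<mu> b = 1 \<longrightarrow> \<mu> a < 1))
       \<longrightarrow> tle G \<alpha> a b)"
proof -
  interpret CA G \<alpha> by unfold_locales (fact assms(1))
  have cm: "comm_monoid \<lparr>carrier = Tsg G \<alpha>, mult = tadd G \<alpha>, one = tzero G \<alpha>\<rparr>" by (rule T_comm_monoid)
  show ?thesis
    using comm_monoid.abstract_main[OF cm]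
    unfolding almost_unperforated_def tmult_pow tle_mle state_eq by simp
qed

end
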